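(* Let $A\in\mathbb{R}^{n\times n}$ be symmetric positive definite with eigenvalues $0<\lambda_1\le\cdots\le\lambda_n$ and a corresponding orthonormal basis of eigenvectors $v_1,\dots,v_n$, let $c\in\mathbb{R}^n$, and consider the Barzilai--Borwein (BB) method applied to $\min_{x\in\mathbb{R}^n} f(x)=\frac12 x^\top Ax-c^\top x$, started from an arbitrary $x_0\in\mathbb{R}^n$. Let $g_k=Ax_k-c$ and write $g_k=\sum_{i=1}^n d_k^i v_i$. Then $$\left|d_{k+1}^i\right|\le \left|d_k^i\right|\cdot\max\left\{\frac{\lambda_i}{\lambda_1}-1,\ 1-\frac{\lambda_i}{\lambda_n}\right\}\quad\text{for all } k\ge 1,\ 1\le i\le n.$$ Moreover, if for some $k\ge 1$ and some index $i$ one of the following conditions holds: (1) $d_{k-1}^i$ is in the shrinking mode, i.e. $\sum_{j=1}^n(\lambda_j-\lambda_i)(d_{k-1}^j)^2\ge 0$; (2) $d_{k-1}^i$ is in the fluctuation mode, i.e. $\sum_{j=1}^n(\lambda_j-\lambda_i)(d_{k-1}^j)^2<0$, and $(d_{k-1}^i)^2\ge\sum_{j=1}^{i-1}(d_{k-1}^j)^2$; then $$\left|d_{k+1}^i\right|\le\left(1-\frac{1}{\kappa}\right)\left|d_k^i\right|,$$ where $\kappa=\lambda_n/\lambda_1$ is the condition number of $A$.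
   Context: The BB method for this problem: $x_1=x_0-\alpha_0 g_0$ with the exact line-search (steepest descent) step $\alpha_0=\frac{g_0^\top g_0}{g_0^\top A g_0}$, and for $k\ge1$, $x_{k+1}=x_k-\alpha_k g_k$ with $\alpha_k=\frac{s_{k-1}^\top s_{k-1}}{s_{k-1}^\top y_{k-1}}$, $s_{k-1}=x_k-x_{k-1}$, $y_{k-1}=g_k-g_{k-1}$; for this quadratic this equals $\alpha_k=\frac{g_{k-1}^\top g_{k-1}}{g_{k-1}^\top A g_{k-1}}$. Equivalently, the coefficients satisfy $d_1^i=d_0^i\cdot\frac{\sum_{j}(\lambda_j-\lambda_i)(d_0^j)^2}{\sum_j\lambda_j(d_0^j)^2}$ and $d_{k+1}^i=d_k^i\cdot\frac{\sum_{j}(\lambda_j-\lambda_i)(d_{k-1}^j)^2}{\sum_j\lambda_j(d_{k-1}^j)^2}$ for $k\ge1$. Convention: if some gradient vanishes, the method has reached the minimizer and all subsequent gradients (coefficients) are taken to be zero. *)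

theory Defs
  imports "HOL-Analysis.Analysis"
begin

text \<open>Gradient of f(x) = 1/2 x^T A x - c^T x, i.e. g = A x - c.\<close>
definition qgrad :: "real^'n^'n \<Rightarrow> real^'n \<Rightarrow> real^'n \<Rightarrow> real^'n" where
  "qgrad A c x = A *v x - c"

text \<open>First step: exact line search (steepest descent) step;
  afterwards alpha_k = s_{k-1}^T s_{k-1} / s_{k-1}^T y_{k-1}.
  Isabelle's convention x/0 = 0 realizes the stated convention: once a gradient vanishes,
  the iterate stays fixed and all subsequent gradients are zero.\<close>
fun bb_iter :: "real^'n^'n \<Rightarrow> real^'n \<Rightarrow> real^'n \<Rightarrow> nat \<Rightarrow> real^'n" where
  "bb_iter A c x0 0 = x0"
| "bb_iter A c x0 (Suc 0) =
     (let g0 = qgrad A c x0 in x0 - ((g0 \<bullet> g0) / (g0 \<bullet> (A *v g0))) *\<^sub>R g0)"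
| "bb_iter A c x0 (Suc (Suc k)) =
     (let xk1 = bb_iter A c x0 (Suc k); xk = bb_iter A c x0 k;
          s = xk1 - xk; y = qgrad A c xk1 - qgrad A c xk
      in xk1 - ((s \<bullet> s) / (s \<bullet> y)) *\<^sub>R qgrad A c xk1)"

definition bb_grad :: "real^'n^'n \<Rightarrow> real^'n \<Rightarrow> real^'n \<Rightarrow> nat \<Rightarrow> real^'n" where
  "bb_grad A c x0 k = qgrad A c (bb_iter A c x0 k)"

end

theory Submission imports Defs begin

lemma decomp:
  fixes v :: "nat \<Rightarrow> real^'n"
  assumes orthonormal: "\<And>i j. i < CARD('n) \<Longrightarrow> j < CARD('n) \<Longrightarrow>
                         v i \<bullet> v j = (if i = j then 1 else 0)"
  shows "y = (\<Sum>j<CARD('n). (y \<bullet> v j) *\<^sub>R v j)"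
proof -
  let ?N = "CARD('n)"
  let ?B = "v ` {..<?N}"
  have inj: "inj_on v {..<?N}"
    by (rule inj_onI) (metis orthonormal lessThan_iff one_neq_zero)
  have cardB: "card ?B = ?N" using inj by (simp add: card_image)
  have pw: "pairwise orthogonal ?B"
    unfolding pairwise_def orthogonal_def using orthonormal by fastforce
  have n0: "0 \<notin> ?B" using orthonormal by fastforce
  have ind: "independent ?B" by (rule pairwise_orthogonal_independent[OF pw n0])
  have "UNIV \<subseteq> span ?B"
    by (rule card_ge_dim_independent) (use ind cardB in auto)
  define h where "h = y - (\<Sum>j<?N. (y \<bullet> v j) *\<^sub>R v j)"
  have hv: "orthogonal h b" if hb: "b \<in> ?B" for b
  proof -
    obtain i where i: "i < ?N" "b = v i" using hb by auto
    have "h \<bullet> v i = y \<bullet> v i - (\<Sum>j<?N. (y \<bullet> v j) * (v j \<bullet> v i))"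
      unfolding h_def by (simp add: inner_diff_left inner_sum_left)
    also have "(\<Sum>j<?N. (y \<bullet> v j) * (v j \<bullet> v i)) = (\<Sum>j<?N. if j = i then y \<bullet> v i else 0)"
      by (rule sum.cong) (use i orthonormal in auto)
    also have "\<dots> = y \<bullet> v i" using i by simp
    finally show ?thesis using i by (simp add: orthogonal_def)
  qed
  have "orthogonal h h"
    by (rule orthogonal_to_span[OF _ hv]) (use \<open>UNIV \<subseteq> span ?B\<close> in auto)
  then have "h = 0" by (simp add: orthogonal_def)
  then show ?thesis unfolding h_def by simp
qed

lemma factor_bounds:
  fixes lam e :: "nat \<Rightarrow> real" and N i :: nat
  assumes sorted: "\<And>i j. i \<le> j \<Longrightarrow> j < N \<Longrightarrow> lam i \<le> lam j"
    and L0: "0 < lam 0" and i: "i < N"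
    and S: "S = (\<Sum>j<N. (e j)\<^sup>2)" and T: "T = (\<Sum>j<N. lam j * (e j)\<^sup>2)"
    and Spos: "S > 0"
  shows "\<bar>1 - (S / T) * lam i\<bar> \<le> max (lam i / lam 0 - 1) (1 - lam i / lam (N - 1))"
    and "((\<Sum>j<N. (lam j - lam i) * (e j)\<^sup>2) \<ge> 0
             \<or> ((\<Sum>j<N. (lam j - lam i) * (e j)\<^sup>2) < 0
                \<and> (e i)\<^sup>2 \<ge> (\<Sum>j<i. (e j)\<^sup>2)))
         \<Longrightarrow> \<bar>1 - (S / T) * lam i\<bar> \<le> 1 - 1 / (lam (N - 1) / lam 0)"
proof -
  define L where "L = lam 0"
  define U where "U = lam (N - 1)"
  have lamL: "L \<le> lam j" if "j < N" for j using sorted[of 0 j] that L_def by simp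
  have lamU: "lam j \<le> U" if "j < N" for j using sorted[of j "N - 1"] that U_def by simp
  have Lpos: "L > 0" using L0 L_def by simp
  have LU: "L \<le> U" using lamL[of "N-1"] i U_def by simp
  have Upos: "U > 0" using Lpos LU by simp
  have li: "L \<le> lam i" "lam i \<le> U" "lam i > 0" using lamL lamU i Lpos by (auto intro: less_le_trans)
  have TL: "L * S \<le> T" unfolding S T sum_distrib_left
    by (rule sum_mono) (intro mult_right_mono lamL, auto)
  have TU: "T \<le> U * S" unfolding S T sum_distrib_left
    by (rule sum_mono) (intro mult_right_mono lamU, auto)
  have Tpos: "T > 0" using TL Lpos Spos by (smt (verit) mult_pos_pos)
  have fac: "1 - (S / T) * lam i = (T - lam i * S) / T" using Tpos by (simp add: field_simps)
  have up: "T - lam i * S \<le> (1 - lam i / U) * T"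
  proof -
    have "T \<le> U * S" by (fact TU)
    then have "T / U \<le> S" using Upos by (simp add: field_simps)
    then have "lam i * (T / U) \<le> lam i * S" using li mult_left_mono[of "T/U" S "lam i"] by linarith
    then show ?thesis by (simp add: algebra_simps)
  qed
  have lo: "(1 - lam i / L) * T \<le> T - lam i * S"
  proof -
    have "S \<le> T / L" using TL Lpos by (simp add: field_simps)
    then have "lam i * S \<le> lam i * (T / L)" using li mult_left_mono[of S "T/L" "lam i"] by linarith
    then show ?thesis by (simp add: algebra_simps)
  qed
  have up': "1 - (S / T) * lam i \<le> 1 - lam i / U"
    unfolding fac using up Tpos by (simp add: divide_le_eq)
  have lo': "1 - lam i / L \<le> 1 - (S / T) * lam i"
    unfolding fac using lo Tpos by (simp add: le_divide_eq)
  show "\<bar>1 - (S / T) * lam i\<bar> \<le> max (lam i / lam 0 - 1) (1 - lam i / lam (N - 1))"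
    using up' lo' unfolding L_def U_def by linarith
  have sumeq: "(\<Sum>j<N. (lam j - lam i) * (e j)\<^sup>2) = T - lam i * S"
    unfolding S T by (simp add: algebra_simps sum_subtractf sum_distrib_left)
  have kap: "1 - 1 / (lam (N - 1) / lam 0) = 1 - L / U" unfolding L_def U_def by simp
  assume cond: "((\<Sum>j<N. (lam j - lam i) * (e j)\<^sup>2) \<ge> 0
             \<or> ((\<Sum>j<N. (lam j - lam i) * (e j)\<^sup>2) < 0
                \<and> (e i)\<^sup>2 \<ge> (\<Sum>j<i. (e j)\<^sup>2)))"
  have LUi: "1 - lam i / U \<le> 1 - L / U" using li Upos by (simp add: divide_right_mono)
  show "\<bar>1 - (S / T) * lam i\<bar> \<le> 1 - 1 / (lam (N - 1) / lam 0)"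
    unfolding kap
  proof (cases "T - lam i * S \<ge> 0")
    case True
    then have "1 - (S / T) * lam i \<ge> 0" unfolding fac using Tpos by simp
    then show "\<bar>1 - (S / T) * lam i\<bar> \<le> 1 - L / U" using up' LUi by linarith
  next
    case False
    then have ei: "(e i)\<^sup>2 \<ge> (\<Sum>j<i. (e j)\<^sup>2)" using cond sumeq by linarith
    have "lam i * S - T = (\<Sum>j<N. (lam i - lam j) * (e j)\<^sup>2)"
      unfolding S T by (simp add: algebra_simps sum_subtractf sum_distrib_left)
    also have "\<dots> \<le> (\<Sum>j<N. if j < i then (lam i - L) * (e j)\<^sup>2 else 0)"
    proof (rule sum_mono)
      fix j assume j: "j \<in> {..<N}"
      show "(lam i - lam j) * (e j)\<^sup>2 \<le> (if j < i then (lam i - L) * (e j)\<^sup>2 else 0)"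
      proof (cases "j < i")
        case True then show ?thesis using lamL[of j] j by (simp add: mult_right_mono)
      next
        case False then have "lam i \<le> lam j" using sorted[of i j] j by simp
        then show ?thesis using False by (simp add: mult_nonpos_nonneg)
      qed
    qed
    also have "\<dots> = (\<Sum>j<i. (lam i - L) * (e j)\<^sup>2)"
    proof -
      have "{..<N} \<inter> {j. j < i} = {..<i}" using i by auto
      then show ?thesis by (simp add: sum.If_cases)
    qed
    also have "\<dots> = (lam i - L) * (\<Sum>j<i. (e j)\<^sup>2)" by (simp add: sum_distrib_left)
    also have "\<dots> \<le> (lam i - L) * (e i)\<^sup>2" using ei li by (simp add: mult_left_mono)
    also have "\<dots> \<le> (1 - L / U) * lam i * (e i)\<^sup>2"
    proof -
      have "lam i - L \<le> (1 - L / U) * lam i"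
      proof -
        have "L * lam i / U \<le> L" using li Lpos Upos by (simp add: divide_le_eq mult_left_mono)
        then show ?thesis by (simp add: algebra_simps)
      qed
      then show ?thesis by (simp add: mult_right_mono)
    qed
    also have "\<dots> \<le> (1 - L / U) * T"
    proof -
      have "lam i * (e i)\<^sup>2 \<le> T" unfolding T
        by (rule member_le_sum[where f="\<lambda>j. lam j * (e j)\<^sup>2"]) (use i lamL Lpos in \<open>auto intro!: mult_nonneg_nonneg intro: order.trans[OF less_imp_le[OF Lpos]]\<close>)
      moreover have "0 \<le> 1 - L / U" using LU Upos by simp
      ultimately show ?thesis by (simp add: mult.assoc mult_left_mono)
    qed
    finally have h: "lam i * S - T \<le> (1 - L / U) * T" .
    have "1 - (S / T) * lam i < 0" unfolding fac using Tpos False by (simp add: divide_less_0_iff)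
    moreover have "(S / T) * lam i - 1 = (lam i * S - T) / T" using Tpos by (simp add: field_simps)
    ultimately show "\<bar>1 - (S / T) * lam i\<bar> \<le> 1 - L / U"
      using h Tpos by (simp add: divide_le_eq)
  qed
qed

context
  fixes A :: "real^'n^'n" and c x0 :: "real^'n"
    and lam :: "nat \<Rightarrow> real" and v :: "nat \<Rightarrow> real^'n"
  assumes sym: "transpose A = A"
    and posdef: "\<And>x. x \<noteq> 0 \<Longrightarrow> x \<bullet> (A *v x) > 0"
    and eig: "\<And>i. i < CARD('n) \<Longrightarrow> A *v v i = lam i *\<^sub>R v i"
    and orthonormal: "\<And>i j. i < CARD('n) \<Longrightarrow> j < CARD('n) \<Longrightarrow>
                         v i \<bullet> v j = (if i = j then 1 else 0)"
begin

lemma Asym: "(A *v x) \<bullet> y = x \<bullet> (A *v y)"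
proof -
  have "A *v x = x v* A" using vector_transpose_matrix[of x A] sym by simp
  then show ?thesis by (simp add: dot_lmul_matrix)
qed

lemma Av_v: "i < CARD('n) \<Longrightarrow> (A *v y) \<bullet> v i = lam i * (y \<bullet> v i)"
  by (simp add: Asym eig)

lemma quadform: "y \<bullet> (A *v y) = (\<Sum>j<CARD('n). lam j * (y \<bullet> v j)\<^sup>2)"
proof -
  have "y \<bullet> (A *v y) = (\<Sum>j<CARD('n). (y \<bullet> v j) *\<^sub>R v j) \<bullet> (A *v y)"
    using decomp[OF orthonormal, of y] by simp
  also have "\<dots> = (\<Sum>j<CARD('n). (y \<bullet> v j) * (v j \<bullet> (A *v y)))"
    by (simp add: inner_sum_left)
  also have "\<dots> = (\<Sum>j<CARD('n). lam j * (y \<bullet> v j)\<^sup>2)"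
    by (rule sum.cong) (auto simp: Av_v inner_commute[of "v _"] power2_eq_square)
  finally show ?thesis .
qed

lemma normsq: "y \<bullet> y = (\<Sum>j<CARD('n). (y \<bullet> v j)\<^sup>2)"
proof -
  have "y \<bullet> y = (\<Sum>j<CARD('n). (y \<bullet> v j) *\<^sub>R v j) \<bullet> y"
    using decomp[OF orthonormal, of y] by simp
  also have "\<dots> = (\<Sum>j<CARD('n). (y \<bullet> v j)\<^sup>2)"
    by (simp add: inner_sum_left inner_commute[of "v _"] power2_eq_square)
  finally show ?thesis .
qed

definition Rq :: "real^'n \<Rightarrow> real" where "Rq y = (y \<bullet> y) / (y \<bullet> (A *v y))"

lemma Rq_eq: "Rq y = (y \<bullet> y) / (y \<bullet> (A *v y))" by (simp add: Rq_def)

lemma Rq_zero: "Rq y = 0 \<Longrightarrow> y = 0"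
  using posdef[of y] unfolding Rq_def by (cases "y = 0") auto

lemma grad_of_step0: "qgrad A c (x - a *\<^sub>R qgrad A c x) = qgrad A c x - a *\<^sub>R (A *v qgrad A c x)"
  unfolding qgrad_def by (simp add: matrix_vector_mult_diff_distrib matrix_vector_mult_scaleR algebra_simps)

lemma grad_of_step: "x' = x - a *\<^sub>R qgrad A c x \<Longrightarrow>
   qgrad A c x' = qgrad A c x - a *\<^sub>R (A *v qgrad A c x)"
  using grad_of_step0 by simp

lemma iter: "bb_iter A c x0 (Suc k) = bb_iter A c x0 k
     - Rq (bb_grad A c x0 (k - 1)) *\<^sub>R bb_grad A c x0 k"
proof (induction k rule: less_induct)
  case (less k)
  show ?case
  proof (cases k)
    case 0
    then show ?thesis by (simp add: Let_def Rq_def bb_grad_def)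
  next
    case (Suc m)
    let ?x = "bb_iter A c x0"
    let ?g = "bb_grad A c x0"
    define a where "a = Rq (?g (m - 1))"
    have IHm: "?x (Suc m) = ?x m - a *\<^sub>R ?g m" using less[of m] Suc a_def by simp
    have gm: "?g (Suc m) = ?g m - a *\<^sub>R (A *v ?g m)"
      using grad_of_step[OF IHm[unfolded bb_grad_def]] by (simp add: bb_grad_def)
    define s where "s = ?x (Suc m) - ?x m"
    have s: "s = (- a) *\<^sub>R ?g m" using IHm s_def by simp
    have y: "qgrad A c (?x (Suc m)) - qgrad A c (?x m) = A *v s"
      unfolding s_def qgrad_def by (simp add: algebra_simps)
    have ratio: "(s \<bullet> s) / (s \<bullet> (A *v s)) = Rq (?g m)"
    proof (cases "a = 0")
      case False
      have "(s \<bullet> s) / (s \<bullet> (A *v s)) = (a*a * (?g m \<bullet> ?g m)) / (a*a * (?g m \<bullet> (A *v ?g m)))"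
      proof -
        have As: "A *v s = (-a) *\<^sub>R (A *v ?g m)" unfolding s by (rule matrix_vector_mult_scaleR)
        have 1: "s \<bullet> s = a*a*(?g m \<bullet> ?g m)" unfolding s by simp
        have 2: "s \<bullet> (A *v s) = a*a*(?g m \<bullet> (A *v ?g m))" unfolding As unfolding s by simp
        show ?thesis unfolding 1 2 ..
      qed
      also have "\<dots> = Rq (?g m)" using False unfolding Rq_def by simp
      finally show ?thesis .
    next
      case True
      have "?g (m - 1) = 0" using Rq_zero True a_def by simp
      have "?g m = 0"
      proof (cases m)
        case 0 then show ?thesis using \<open>?g (m - 1) = 0\<close> by simp
      next
        case (Suc p)
        have "?x (Suc p) = ?x p - Rq (?g (p - 1)) *\<^sub>R ?g p" using less[of p] Suc \<open>k = Suc m\<close> by simp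
        from grad_of_step[OF this[unfolded bb_grad_def]] have
          "?g (Suc p) = ?g p - Rq (?g (p - 1)) *\<^sub>R (A *v ?g p)" by (simp add: bb_grad_def)
        then show ?thesis using \<open>?g (m - 1) = 0\<close> Suc by simp
      qed
      then show ?thesis using s by (simp add: Rq_def)
    qed
    have "?x (Suc (Suc m)) = ?x (Suc m) - ((s \<bullet> s) / (s \<bullet> (A *v s))) *\<^sub>R ?g (Suc m)"
      using y unfolding s_def by (simp add: Let_def bb_grad_def)
    then show ?thesis using ratio Suc by simp
  qed
qed

lemma dstep: "i < CARD('n) \<Longrightarrow> bb_grad A c x0 (Suc k) \<bullet> v i
   = (1 - Rq (bb_grad A c x0 (k - 1)) * lam i) * (bb_grad A c x0 k \<bullet> v i)"
proof -
  assume i: "i < CARD('n)"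
  have eq: "bb_grad A c x0 (Suc k) = bb_grad A c x0 k - Rq (bb_grad A c x0 (k - 1)) *\<^sub>R (A *v bb_grad A c x0 k)"
    using grad_of_step[OF iter[unfolded bb_grad_def]] by (simp add: bb_grad_def)
  show ?thesis unfolding eq using i by (simp add: inner_diff_left Av_v algebra_simps)
qed

lemma gzero: "bb_grad A c x0 k = 0 \<Longrightarrow> bb_grad A c x0 (Suc k) = 0"
  using grad_of_step[OF iter[unfolded bb_grad_def], of k] by (simp add: bb_grad_def)

end

theorem proposition1:
  fixes A :: "real^'n^'n" and c x0 :: "real^'n"
    and lam :: "nat \<Rightarrow> real" and v :: "nat \<Rightarrow> real^'n"
  assumes sym: "transpose A = A"
    and posdef: "\<And>x. x \<noteq> 0 \<Longrightarrow> x \<bullet> (A *v x) > 0"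
    and eig: "\<And>i. i < CARD('n) \<Longrightarrow> A *v v i = lam i *\<^sub>R v i"
    and orthonormal: "\<And>i j. i < CARD('n) \<Longrightarrow> j < CARD('n) \<Longrightarrow>
                         v i \<bullet> v j = (if i = j then 1 else 0)"
    and lam_pos: "0 < lam 0"
    and lam_sorted: "\<And>i j. i \<le> j \<Longrightarrow> j < CARD('n) \<Longrightarrow> lam i \<le> lam j"
  defines "d \<equiv> (\<lambda>k i. bb_grad A c x0 k \<bullet> v i)"
    and "\<kappa> \<equiv> lam (CARD('n) - 1) / lam 0"
  shows "(\<forall>k\<ge>1. \<forall>i<CARD('n).
            \<bar>d (Suc k) i\<bar> \<le> \<bar>d k i\<bar> *
               max (lam i / lam 0 - 1) (1 - lam i / lam (CARD('n) - 1)))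
       \<and> (\<forall>k\<ge>1. \<forall>i<CARD('n).
            ((\<Sum>j<CARD('n). (lam j - lam i) * (d (k - 1) j)\<^sup>2) \<ge> 0
             \<or> ((\<Sum>j<CARD('n). (lam j - lam i) * (d (k - 1) j)\<^sup>2) < 0
                \<and> (d (k - 1) i)\<^sup>2 \<ge> (\<Sum>j<i. (d (k - 1) j)\<^sup>2)))
            \<longrightarrow> \<bar>d (Suc k) i\<bar> \<le> (1 - 1 / \<kappa>) * \<bar>d k i\<bar>)"
proof -
  let ?N = "CARD('n)"
  let ?g = "bb_grad A c x0"
  have main: "\<bar>d (Suc k) i\<bar> \<le> \<bar>d k i\<bar> *
               max (lam i / lam 0 - 1) (1 - lam i / lam (CARD('n) - 1))
     \<and> (((\<Sum>j<CARD('n). (lam j - lam i) * (d (k - 1) j)\<^sup>2) \<ge> 0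
             \<or> ((\<Sum>j<CARD('n). (lam j - lam i) * (d (k - 1) j)\<^sup>2) < 0
                \<and> (d (k - 1) i)\<^sup>2 \<ge> (\<Sum>j<i. (d (k - 1) j)\<^sup>2)))
            \<longrightarrow> \<bar>d (Suc k) i\<bar> \<le> (1 - 1 / \<kappa>) * \<bar>d k i\<bar>)"
    if k: "k \<ge> 1" and i: "i < ?N" for k i
  proof -
    obtain m where m: "k = Suc m" using k by (cases k) auto
    show ?thesis
    proof (cases "?g m = 0")
      case True
      then have "?g k = 0" "?g (Suc k) = 0" using gzero[OF sym posdef eig orthonormal] m by auto
      then show ?thesis unfolding d_def by simp
    next
      case False
      define S where "S = (\<Sum>j<?N. (d m j)\<^sup>2)"
      define T where "T = (\<Sum>j<?N. lam j * (d m j)\<^sup>2)"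
      have S': "?g m \<bullet> ?g m = S" unfolding S_def d_def by (rule normsq[OF sym posdef eig orthonormal])
      have T': "?g m \<bullet> (A *v ?g m) = T" unfolding T_def d_def by (rule quadform[OF sym posdef eig orthonormal])
      have Spos: "S > 0" using False S' by (metis inner_gt_zero_iff)
      have step: "d (Suc k) i = (1 - (S / T) * lam i) * d k i"
        using dstep[OF sym posdef eig orthonormal i, where k=k] m S' T'
        unfolding d_def by (simp add: Rq_eq[OF sym posdef eig orthonormal])
      note fb = factor_bounds[of ?N lam, OF lam_sorted lam_pos i S_def T_def Spos]
      have 1: "\<bar>d (Suc k) i\<bar> \<le> \<bar>d k i\<bar> * max (lam i / lam 0 - 1) (1 - lam i / lam (CARD('n) - 1))"
        unfolding step abs_mult using fb(1) by (simp add: mult.commute mult_left_mono)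
      have 2: "\<bar>d (Suc k) i\<bar> \<le> (1 - 1 / \<kappa>) * \<bar>d k i\<bar>"
        if c: "((\<Sum>j<CARD('n). (lam j - lam i) * (d (k - 1) j)\<^sup>2) \<ge> 0
             \<or> ((\<Sum>j<CARD('n). (lam j - lam i) * (d (k - 1) j)\<^sup>2) < 0
                \<and> (d (k - 1) i)\<^sup>2 \<ge> (\<Sum>j<i. (d (k - 1) j)\<^sup>2)))"
        unfolding step abs_mult \<kappa>_def using fb(2) c m by (simp add: mult_right_mono)
      show ?thesis using 1 2 by blast
    qed
  qed
  show ?thesis using main by blast
qed

end
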